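(* Let $h$ be the morphism on the alphabet $\{1,3,4\}$ given by $h(1)=14$, $h(3)=14$, $h(4)=3$. For all $n\ge5$ one has (i) $\Delta C_Z(\Psi_n)=h^{n-4}(3)$ and (ii) $\Delta C_Z(\Lambda_n)=h^{n-5}(3)$.
   Context: Fibonacci numbers: $F_0=0$, $F_1=1$, $F_n=F_{n-1}+F_{n-2}$. Every integer $N\ge0$ has a unique Zeckendorf expansion $N=\sum_{i\ge0}d_i(N)F_{i+2}$ with $d_i(N)\in\{0,1\}$ and no two consecutive digits equal to $1$; $s_Z(N)=\sum_i d_i(N)$. A point of constancy of $s_Z$ is an integer $N\ge0$ with $s_Z(N+1)=s_Z(N)$. For $n\ge3$ define the integer intervals $\Lambda_n=[F_n,F_{n+1}-1]$ and $\Psi_n=[0,F_n-1]$. For an integer interval $I$ (here $I=\Lambda_n$ or $I=\Psi_n$), let $c_1<c_2<\dots<c_k$ be the points of constancy of $s_Z$ lying in $I$ and let $c_{k+1}$ be the smallest point of constancy of $s_Z$ larger than $\max I$; then $\Delta C_Z(I)$ denotes the word $(c_2-c_1)(c_3-c_2)\cdots(c_{k+1}-c_k)$ over the alphabet of positive integers. *)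

theory Defs
  imports "HOL-Number_Theory.Fib"
begin

definition zeck_set :: "nat \<Rightarrow> nat set" where
  "zeck_set N = (THE S. finite S \<and> (\<forall>i\<in>S. Suc i \<notin> S) \<and> (\<Sum>i\<in>S. fib (i + 2)) = N)"

definition sZ :: "nat \<Rightarrow> nat" where
  "sZ N = card (zeck_set N)"

definition constancy_point :: "nat \<Rightarrow> bool" where
  "constancy_point N \<longleftrightarrow> sZ (N + 1) = sZ N"

fun diffs :: "nat list \<Rightarrow> nat list" where
  "diffs (x # y # ys) = (y - x) # diffs (y # ys)"
| "diffs _ = []"

definition DeltaCZ :: "nat \<Rightarrow> nat \<Rightarrow> nat list" where
  "DeltaCZ a b = diffs (sorted_list_of_set {c \<in> {a..b}. constancy_point c}
                        @ [LEAST c. c > b \<and> constancy_point c])"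

definition Lambda_word :: "nat \<Rightarrow> nat list" where
  "Lambda_word n = DeltaCZ (fib n) (fib (n + 1) - 1)"

definition Psi_word :: "nat \<Rightarrow> nat list" where
  "Psi_word n = DeltaCZ 0 (fib n - 1)"

fun h_letter :: "nat \<Rightarrow> nat list" where
  "h_letter x = (if x = 1 then [1, 4] else if x = 3 then [1, 4] else if x = 4 then [3] else [])"

definition h :: "nat list \<Rightarrow> nat list" where
  "h w = concat (map h_letter w)"

end

theory Submission
  imports Defs
begin

definition zv :: "nat set \<Rightarrow> bool" where
  "zv S \<longleftrightarrow> finite S \<and> (\<forall>i\<in>S. Suc i \<notin> S)"

lemma fib_lt_imp: "fib a < fib b \<Longrightarrow> a < b"
  using fib_mono[of b a] by linarith

lemma fib_pos2: "fib (Suc n) > 0"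
  by (simp add: fib_neq_0_nat)

lemma fib_SSS: "fib (Suc (Suc n)) = fib (Suc n) + fib n"
  by simp

lemma zv_upper:
  "zv S \<Longrightarrow> \<forall>i\<in>S. i < k \<Longrightarrow> (\<Sum>i\<in>S. fib (i + 2)) < fib (k + 2)"
proof (induction k arbitrary: S rule: less_induct)
  case (less k)
  show ?case
  proof (cases k)
    case 0
    then have "S = {}" using less.prems by auto
    then show ?thesis using 0 by (simp add: fib_neq_0_nat)
  next
    case (Suc j)
    show ?thesis
    proof (cases j)
      case 0
      then have "S \<subseteq> {0}" using less.prems Suc by auto
      then have "S = {} \<or> S = {0}" by auto
      then show ?thesis using Suc 0 by (auto simp: numeral_eq_Suc)
    next
      case (Suc m)
      have fin: "finite S" using less.prems zv_def by auto
      show ?thesis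
      proof (cases "Suc m \<in> S")
        case True
        then have "m \<notin> S" using less.prems zv_def by auto
        define S' where "S' = S - {Suc m}"
        have zv': "zv S'" using less.prems unfolding zv_def S'_def by auto
        have b: "\<forall>i\<in>S'. i < m" using less.prems(2) \<open>k = Suc j\<close> Suc \<open>m \<notin> S\<close>
          unfolding S'_def by (auto simp: less_Suc_eq)
        have "(\<Sum>i\<in>S'. fib (i + 2)) < fib (m + 2)"
          using less.IH[of m S'] zv' b \<open>k = Suc j\<close> Suc by auto
        moreover have "(\<Sum>i\<in>S. fib (i + 2)) = fib (Suc m + 2) + (\<Sum>i\<in>S'. fib (i + 2))"
          unfolding S'_def using fin True by (simp add: sum.remove)
        ultimately show ?thesis using \<open>k = Suc j\<close> Suc by (simp add: numeral_eq_Suc)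
      next
        case False
        have b: "\<forall>i\<in>S. i < Suc m" using less.prems(2) \<open>k = Suc j\<close> Suc False
          by (auto simp: less_Suc_eq)
        have "(\<Sum>i\<in>S. fib (i + 2)) < fib (Suc m + 2)"
          using less.IH[of "Suc m" S] less.prems(1) b \<open>k = Suc j\<close> Suc by auto
        moreover have "fib (Suc m + 2) \<le> fib (k + 2)" using \<open>k = Suc j\<close> Suc
          by (intro fib_mono) auto
        ultimately show ?thesis by linarith
      qed
    qed
  qed
qed

lemma zv_unique:
  "zv S \<Longrightarrow> zv T \<Longrightarrow> (\<Sum>i\<in>S. fib (i + 2)) = (\<Sum>i\<in>T. fib (i + 2)) \<Longrightarrow> S = T"
proof (induction "card S" arbitrary: S T rule: less_induct)
  case less
  have fS: "finite S" and fT: "finite T" using less.prems zv_def by auto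
  have pos: "\<And>i. fib (i + 2) > 0" by (simp add: fib_neq_0_nat)
  show ?case
  proof (cases "S = {} \<or> T = {}")
    case True
    then show ?thesis
    proof
      assume "S = {}"
      then have "(\<Sum>i\<in>T. fib (i + 2)) = 0" using less.prems by simp
      then have "\<forall>i\<in>T. fib (i + 2) = 0" using fT by simp
      then have "T = {}" by (metis equals0I gr_implies_not0 pos)
      then show ?thesis using \<open>S = {}\<close> by simp
    next
      assume "T = {}"
      then have "(\<Sum>i\<in>S. fib (i + 2)) = 0" using less.prems by simp
      then have "\<forall>i\<in>S. fib (i + 2) = 0" using fS by simp
      then have "S = {}" by (metis equals0I gr_implies_not0 pos)
      then show ?thesis using \<open>T = {}\<close> by simp
    qed
  next
    case False
    then have ne: "S \<noteq> {}" "T \<noteq> {}" by auto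
    define m where "m = Max S"
    define m' where "m' = Max T"
    have mS: "m \<in> S" using fS ne m_def by simp
    have mT: "m' \<in> T" using fT ne m'_def by simp
    have l1: "fib (m + 2) \<le> (\<Sum>i\<in>S. fib (i + 2))"
      using member_le_sum[of m S "\<lambda>i. fib(i+2)", OF mS _ fS] by simp
    have l2: "fib (m' + 2) \<le> (\<Sum>i\<in>T. fib (i + 2))"
      using member_le_sum[of m' T "\<lambda>i. fib(i+2)", OF mT _ fT] by simp
    have bS: "\<forall>i\<in>S. i < Suc m" using Max_ge[OF fS] m_def by (simp add: less_Suc_eq_le)
    have bT: "\<forall>i\<in>T. i < Suc m'" using Max_ge[OF fT] m'_def by (simp add: less_Suc_eq_le)
    have u1: "(\<Sum>i\<in>S. fib (i + 2)) < fib (Suc m + 2)"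
      using zv_upper[OF less.prems(1) bS] .
    have u2: "(\<Sum>i\<in>T. fib (i + 2)) < fib (Suc m' + 2)"
      using zv_upper[OF less.prems(2) bT] .
    have "fib (m + 2) < fib (Suc m' + 2)" using l1 u2 less.prems(3) by linarith
    then have "m + 2 < Suc m' + 2" by (rule fib_lt_imp)
    moreover have "fib (m' + 2) < fib (Suc m + 2)" using l2 u1 less.prems(3) by linarith
    then have "m' + 2 < Suc m + 2" by (rule fib_lt_imp)
    ultimately have "m = m'" by linarith
    define S' where "S' = S - {m}"
    define T' where "T' = T - {m}"
    have z1: "zv S'" and z2: "zv T'" using less.prems unfolding zv_def S'_def T'_def by auto
    have s1: "(\<Sum>i\<in>S'. fib (i + 2)) = (\<Sum>i\<in>T'. fib (i + 2))"
    proof -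
      have "(\<Sum>i\<in>S. fib (i + 2)) = fib (m + 2) + (\<Sum>i\<in>S'. fib (i + 2))"
        unfolding S'_def by (rule sum.remove[OF fS mS])
      moreover have "(\<Sum>i\<in>T. fib (i + 2)) = fib (m + 2) + (\<Sum>i\<in>T'. fib (i + 2))"
        unfolding T'_def using sum.remove[OF fT mT] \<open>m = m'\<close> by simp
      ultimately show ?thesis using less.prems(3) by linarith
    qed
    have c1: "card S' < card S" unfolding S'_def by (rule card_Diff1_less[OF fS mS])
    have "S' = T'" using less.hyps[OF c1 z1 z2 s1] .
    then show ?thesis using mS mT \<open>m = m'\<close> unfolding S'_def T'_def by blast
  qed
qed
lemma zv_exists_aux:
  "N < fib (k + 2) \<Longrightarrow> \<exists>S. zv S \<and> (\<Sum>i\<in>S. fib (i + 2)) = N"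
proof (induction k arbitrary: N rule: less_induct)
  case (less k)
  show ?case
  proof (cases k)
    case 0
    then have "N = 0" using less.prems by simp
    then show ?thesis by (intro exI[of _ "{}"]) (simp add: zv_def)
  next
    case (Suc j)
    show ?thesis
    proof (cases j)
      case 0
      then have "N = 0 \<or> N = 1" using less.prems Suc by (simp add: numeral_eq_Suc less_Suc_eq)
      then show ?thesis
      proof
        assume "N = 0" then show ?thesis by (intro exI[of _ "{}"]) (simp add: zv_def)
      next
        assume "N = 1" then show ?thesis by (intro exI[of _ "{0}"]) (simp add: zv_def)
      qed
    next
      case (Suc m)
      have k: "k = Suc (Suc m)" using Suc \<open>k = Suc j\<close> by simp
      show ?thesis
      proof (cases "N < fib (Suc m + 2)")
        case True
        then show ?thesis using less.IH[of "Suc m" N] k by auto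
      next
        case False
        have fk: "fib (k + 2) = fib (Suc m + 2) + fib (m + 2)" using k
          by (simp add: numeral_eq_Suc)
        define N' where "N' = N - fib (Suc m + 2)"
        have "N' < fib (m + 2)" using less.prems fk False N'_def by linarith
        then obtain S' where S': "zv S'" "(\<Sum>i\<in>S'. fib (i + 2)) = N'"
          using less.IH[of m N'] k by auto
        have fS': "finite S'" using S' zv_def by auto
        have b: "\<forall>i\<in>S'. i < m"
        proof
          fix i assume "i \<in> S'"
          then have "fib (i + 2) \<le> N'" using S' fS' member_le_sum[of i S' "\<lambda>i. fib (i+2)"] by auto
          then have "fib (i + 2) < fib (m + 2)" using \<open>N' < fib (m + 2)\<close> by linarith
          then show "i < m" using fib_lt_imp by fastforce
        qed
        have "zv (insert (Suc m) S')" using S' b fS' unfolding zv_def by auto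
        moreover have "(\<Sum>i\<in>insert (Suc m) S'. fib (i + 2)) = fib (Suc m + 2) + (\<Sum>i\<in>S'. fib (i + 2))"
          by (rule sum.insert[OF fS']) (use b in auto)
        then have "(\<Sum>i\<in>insert (Suc m) S'. fib (i + 2)) = N"
          using S' N'_def False by linarith
        ultimately show ?thesis by blast
      qed
    qed
  qed
qed

lemma fib_ge: "n \<le> fib (n + 2)"
proof (induction n)
  case 0 then show ?case by simp
next
  case (Suc n)
  have "fib (Suc n + 2) = fib (n + 2) + fib (n + 1)" by (simp add: numeral_eq_Suc)
  moreover have "fib (n + 1) > 0" by (simp add: fib_neq_0_nat)
  ultimately show ?case using Suc by linarith
qed

lemma zv_exists: "\<exists>S. zv S \<and> (\<Sum>i\<in>S. fib (i + 2)) = N"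
proof -
  have "N < fib (Suc N + 2)" using fib_ge[of "Suc N"] fib_mono[of "N+2" "Suc N + 2"]
  proof -
    have "fib (Suc N + 2) = fib (N + 2) + fib (N + 1)" by (simp add: numeral_eq_Suc)
    moreover have "fib (N + 1) > 0" by (simp add: fib_neq_0_nat)
    ultimately show ?thesis using fib_ge[of N] by linarith
  qed
  then show ?thesis by (rule zv_exists_aux)
qed

lemma zeck_set_eq: "zv S \<Longrightarrow> (\<Sum>i\<in>S. fib (i + 2)) = N \<Longrightarrow> zeck_set N = S"
  unfolding zeck_set_def
proof (rule the_equality)
  assume "zv S" "(\<Sum>i\<in>S. fib (i + 2)) = N"
  then show "finite S \<and> (\<forall>i\<in>S. Suc i \<notin> S) \<and> (\<Sum>i\<in>S. fib (i + 2)) = N"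
    by (simp add: zv_def)
next
  fix T assume "zv S" "(\<Sum>i\<in>S. fib (i + 2)) = N"
    "finite T \<and> (\<forall>i\<in>T. Suc i \<notin> T) \<and> (\<Sum>i\<in>T. fib (i + 2)) = N"
  then show "T = S" using zv_unique[of T S] by (simp add: zv_def)
qed

lemma sZ_0: "sZ 0 = 0"
  unfolding sZ_def using zeck_set_eq[of "{}" 0] by (simp add: zv_def)

lemma sZ_pos: "N > 0 \<Longrightarrow> sZ N > 0"
proof -
  assume "N > 0"
  obtain S where S: "zv S" "(\<Sum>i\<in>S. fib (i + 2)) = N" using zv_exists by blast
  then have "S \<noteq> {}" using \<open>N > 0\<close> by auto
  moreover have "finite S" using S zv_def by auto
  ultimately show ?thesis unfolding sZ_def using zeck_set_eq[OF S] by (simp add: card_gt_0_iff)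
qed

lemma sZ_rec:
  assumes "2 \<le> k" "fib k \<le> N" "N < fib (Suc k)"
  shows "sZ N = Suc (sZ (N - fib k))"
proof -
  obtain S' where S': "zv S'" "(\<Sum>i\<in>S'. fib (i + 2)) = N - fib k" using zv_exists by blast
  have fS': "finite S'" using S' zv_def by auto
  have fk: "fib (Suc k) = fib k + fib (k - 1)" using assms(1)
    by (metis Suc_diff_Suc Suc_le_lessD fib2 less_imp_Suc_add numeral_2_eq_2 add_diff_cancel_left' plus_1_eq_Suc)
  have b: "\<forall>i\<in>S'. i + 2 < k - 1"
  proof
    fix i assume "i \<in> S'"
    then have "fib (i + 2) \<le> N - fib k" using S' fS' member_le_sum[of i S' "\<lambda>i. fib (i+2)"] by auto
    then have "fib (i + 2) < fib (k - 1)" using assms fk by linarith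
    then show "i + 2 < k - 1" using fib_lt_imp by fastforce
  qed
  define S where "S = insert (k - 2) S'"
  have nin: "k - 2 \<notin> S'" using b by force
  have "zv S" using S' b fS' unfolding zv_def S_def by force
  moreover have "(\<Sum>i\<in>S. fib (i + 2)) = N"
  proof -
    have e: "k - 2 + 2 = k" using assms(1) by simp
    have "(\<Sum>i\<in>S. fib (i + 2)) = fib (k - 2 + 2) + (\<Sum>i\<in>S'. fib (i + 2))"
      unfolding S_def by (rule sum.insert[OF fS' nin])
    then have "(\<Sum>i\<in>S. fib (i + 2)) = fib k + (\<Sum>i\<in>S'. fib (i + 2))"
      by (simp only: e)
    then show ?thesis using S' assms(2) by linarith
  qed
  ultimately have "zeck_set N = S" by (rule zeck_set_eq)
  moreover have "zeck_set (N - fib k) = S'" using S' by (rule zeck_set_eq)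
  ultimately show ?thesis unfolding sZ_def S_def using fS' nin by simp
qed


lemma fib3: "fib 3 = 2" by (simp add: numeral_eq_Suc)
lemma fib4: "fib 4 = 3" by (simp add: numeral_eq_Suc)
lemma fib5: "fib 5 = 5" by (simp add: numeral_eq_Suc)
lemma fib6: "fib 6 = 8" by (simp add: numeral_eq_Suc)
lemma fib7: "fib 7 = 13" by (simp add: numeral_eq_Suc)

lemma fib_Suc_split: "1 \<le> k \<Longrightarrow> fib (Suc k) = fib k + fib (k - 1)"
  by (cases k) auto

lemma fib_ge2: "3 \<le> k \<Longrightarrow> 2 \<le> fib k"
  using fib_mono[of 3 k] fib3 by simp

lemma fib_ge3: "4 \<le> k \<Longrightarrow> 3 \<le> fib k"
  using fib_mono[of 4 k] fib4 by simp

lemma sZ_fib: "2 \<le> k \<Longrightarrow> sZ (fib k) = 1"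
proof -
  assume k: "2 \<le> k"
  have "fib (k - 1) > 0" using k by (simp add: fib_neq_0_nat)
  then have "fib k < fib (Suc k)" using fib_Suc_split[of k] k by simp
  then show ?thesis using sZ_rec[of k "fib k"] k sZ_0 by simp
qed

lemma cp_shift:
  assumes "2 \<le> k" "fib k \<le> N" "Suc N < fib (Suc k)"
  shows "constancy_point N = constancy_point (N - fib k)"
proof -
  have a: "sZ N = Suc (sZ (N - fib k))" using sZ_rec[of k N] assms by simp
  have b: "sZ (N + 1) = Suc (sZ (N + 1 - fib k))" using sZ_rec[of k "N+1"] assms by simp
  have c: "N + 1 - fib k = N - fib k + 1" using assms(2) by simp
  show ?thesis unfolding constancy_point_def using a b c by simp
qed

lemma not_cp_top: "4 \<le> k \<Longrightarrow> \<not> constancy_point (fib (Suc k) - 1)"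
proof
  assume k: "4 \<le> k" and cp: "constancy_point (fib (Suc k) - 1)"
  define M where "M = fib (Suc k) - 1"
  have f1: "fib (Suc k) = fib k + fib (k - 1)" using k fib_Suc_split by simp
  have f2: "fib (k - 1) \<ge> 2" using k fib_ge2 by simp
  have M1: "M + 1 = fib (Suc k)" using f1 f2 M_def by linarith
  have s1: "sZ (M + 1) = 1" unfolding M1 by (rule sZ_fib) (use k in simp)
  have c1: "fib k \<le> M" and c2: "M < fib (Suc k)" using f1 f2 M_def by linarith+
  have a: "sZ M = Suc (sZ (M - fib k))" by (rule sZ_rec) (use k c1 c2 in auto)
  have "M - fib k > 0" using f1 f2 M_def by linarith
  then have "sZ (M - fib k) > 0" by (rule sZ_pos)
  then have "sZ M \<ge> 2" using a by linarith
  moreover have "sZ (M + 1) = sZ M" using cp unfolding constancy_point_def M_def by simp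
  ultimately show False using s1 by linarith
qed

lemma sZ_1: "sZ 1 = 1" using sZ_fib[of 2] by simp
lemma sZ_2: "sZ 2 = 1" using sZ_fib[of 3] fib3 by simp

lemma not_cp_fib: "4 \<le> k \<Longrightarrow> \<not> constancy_point (fib k)"
proof -
  assume k: "4 \<le> k"
  have f1: "fib (Suc k) = fib k + fib (k - 1)" using k fib_Suc_split by simp
  have f2: "fib (k - 1) \<ge> 2" using k fib_ge2 by simp
  have "sZ (fib k + 1) = Suc (sZ (fib k + 1 - fib k))" using sZ_rec[of k "fib k + 1"] k f1 f2 by simp
  then have "sZ (fib k + 1) = 2" using sZ_1 by simp
  then show ?thesis unfolding constancy_point_def using sZ_fib[of k] k by simp
qed

lemma cp_fib1: "5 \<le> k \<Longrightarrow> constancy_point (fib k + 1)"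
proof -
  assume k: "5 \<le> k"
  have f1: "fib (Suc k) = fib k + fib (k - 1)" using k fib_Suc_split by simp
  have f2: "fib (k - 1) \<ge> 3" using k fib_ge3 by simp
  have "sZ (fib k + 1) = Suc (sZ (fib k + 1 - fib k))" using sZ_rec[of k "fib k + 1"] k f1 f2 by simp
  then have a: "sZ (fib k + 1) = 2" using sZ_1 by simp
  have "sZ (fib k + 2) = Suc (sZ (fib k + 2 - fib k))" using sZ_rec[of k "fib k + 2"] k f1 f2 by simp
  then have b: "sZ (fib k + 2) = 2" using sZ_2 by simp
  show ?thesis unfolding constancy_point_def using a b by simp
qed

lemma next_eq: "5 \<le> k \<Longrightarrow> (LEAST c. c > fib k - 1 \<and> constancy_point c) = fib k + 1"
proof (rule Least_equality)
  assume k: "5 \<le> k"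
  show "fib k + 1 > fib k - 1 \<and> constancy_point (fib k + 1)" using cp_fib1[OF k] by simp
next
  fix y assume k: "5 \<le> k" and y: "y > fib k - 1 \<and> constancy_point y"
  have "fib k > 0" using k by (simp add: fib_neq_0_nat)
  then have "y \<ge> fib k" using y by linarith
  moreover have "y \<noteq> fib k" using y not_cp_fib[of k] k by auto
  ultimately show "fib k + 1 \<le> y" by simp
qed

lemma slist: "sorted_list_of_set {c \<in> {a..b}. P c} = filter P [a..<Suc b]"
proof -
  have e: "{c \<in> {a..b}. P c} = set (filter P [a..<Suc b])" by auto
  have so: "sorted (filter P [a..<Suc b])" by (rule sorted_wrt_filter) (rule sorted_upt)
  have d: "distinct (filter P [a..<Suc b])" by simp
  show ?thesis
    by (simp only: e sorted_list_of_set_sort_remdups distinct_remdups_id[OF d] sorted_sort_id[OF so])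
qed

lemma diffs_map_add: "diffs (map (\<lambda>x. x + c) xs) = diffs xs"
  by (induction xs rule: diffs.induct) auto

lemma diffs_app_aux: "diffs (x # xs @ y # ys) = diffs (x # xs @ [y]) @ diffs (y # ys)"
  apply (induction xs arbitrary: x)
  apply simp
  subgoal for a xs x by (cases xs) auto
  done

lemma diffs_app: "diffs (xs @ y # ys) = diffs (xs @ [y]) @ diffs (y # ys)"
proof (cases xs)
  case Nil then show ?thesis by simp
next
  case (Cons a as) then show ?thesis using diffs_app_aux[of a as y ys] by simp
qed

lemma Psi_eq: "5 \<le> n \<Longrightarrow> Psi_word n = diffs (filter constancy_point [0..<fib n] @ [fib n + 1])"
proof -
  assume n: "5 \<le> n"
  have "fib n > 0" using n by (simp add: fib_neq_0_nat)
  then show ?thesis unfolding Psi_word_def DeltaCZ_def slist using next_eq[OF n] by simp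
qed

lemma Lam_eq: "5 \<le> n \<Longrightarrow>
  Lambda_word n = diffs (filter constancy_point [fib n..<fib (Suc n)] @ [fib (Suc n) + 1])"
proof -
  assume n: "5 \<le> n"
  have "fib (Suc n) > 0" by (simp add: fib_neq_0_nat)
  then show ?thesis unfolding Lambda_word_def DeltaCZ_def slist using next_eq[of "Suc n"] n by simp
qed

lemma Q_shift: "6 \<le> n \<Longrightarrow>
  filter constancy_point [fib n..<fib (Suc n)] =
  map (\<lambda>x. x + fib n) (filter constancy_point [0..<fib (n - 1)])"
proof -
  assume n: "6 \<le> n"
  have f1: "fib (Suc n) = fib (n - 1) + fib n" using n fib_Suc_split[of n] by simp
  have u: "[fib n..<fib (Suc n)] = map (\<lambda>x. x + fib n) [0..<fib (n - 1)]"
    using f1 map_add_upt by simp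
  have "filter (constancy_point \<circ> (\<lambda>x. x + fib n)) [0..<fib (n - 1)] =
        filter constancy_point [0..<fib (n - 1)]"
  proof (rule filter_cong)
    fix x assume "x \<in> set [0..<fib (n - 1)]"
    then have x: "x < fib (n - 1)" by simp
    show "(constancy_point \<circ> (\<lambda>x. x + fib n)) x = constancy_point x"
    proof (cases "Suc x < fib (n - 1)")
      case True
      then show ?thesis using cp_shift[of n "x + fib n"] n f1 by simp
    next
      case False
      then have xe: "x = fib (n - 1) - 1" using x by simp
      have a: "x + fib n = fib (Suc n) - 1" using xe f1 x by simp
      have b: "fib (n - 1) = fib (Suc (n - 2))" using n by (simp add: Suc_diff_Suc numeral_2_eq_2)
      show ?thesis using not_cp_top[of n] not_cp_top[of "n - 2"] n a b xe by simp
    qed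
  qed simp
  then show ?thesis using u filter_map by metis
qed

lemma Q_head: "5 \<le> n \<Longrightarrow>
  filter constancy_point [fib n..<fib (Suc n)] =
  (fib n + 1) # filter constancy_point [fib n + 2..<fib (Suc n)]"
proof -
  assume n: "5 \<le> n"
  have f1: "fib (Suc n) = fib n + fib (n - 1)" using n fib_Suc_split[of n] by simp
  have f2: "fib (n - 1) \<ge> 3" using n fib_ge3 by simp
  have "[fib n..<fib (Suc n)] = fib n # (fib n + 1) # [fib n + 2..<fib (Suc n)]"
    using f1 f2 by (simp add: upt_conv_Cons)
  then show ?thesis using not_cp_fib[of n] cp_fib1[OF n] n by simp
qed

lemma Psi_step: "5 \<le> n \<Longrightarrow> Psi_word (Suc n) = Psi_word n @ Lambda_word n"
proof -
  assume n: "5 \<le> n"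
  have f1: "fib (Suc n) = fib n + fib (n - 1)" using n fib_Suc_split[of n] by simp
  have "[0..<fib (Suc n)] = [0..<fib n] @ [fib n..<fib (Suc n)]"
    using f1 upt_add_eq_append[of 0 "fib n" "fib (n - 1)"] by simp
  then have "filter constancy_point [0..<fib (Suc n)] =
    filter constancy_point [0..<fib n] @ (fib n + 1) # filter constancy_point [fib n + 2..<fib (Suc n)]"
    using Q_head[OF n] by simp
  then have "Psi_word (Suc n) = diffs (filter constancy_point [0..<fib n] @ (fib n + 1) #
      (filter constancy_point [fib n + 2..<fib (Suc n)] @ [fib (Suc n) + 1]))"
    using Psi_eq[of "Suc n"] n by simp
  also have "\<dots> = Psi_word n @ Lambda_word n"
    using diffs_app[of "filter constancy_point [0..<fib n]" "fib n + 1"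
       "filter constancy_point [fib n + 2..<fib (Suc n)] @ [fib (Suc n) + 1]"]
      Psi_eq[OF n] Lam_eq[OF n] Q_head[OF n] by simp
  finally show ?thesis .
qed

lemma Lam_Psi: "6 \<le> n \<Longrightarrow> Lambda_word n = Psi_word (n - 1)"
proof -
  assume n: "6 \<le> n"
  have f1: "fib (Suc n) = fib (n - 1) + fib n" using n fib_Suc_split[of n] by simp
  have "Lambda_word n = diffs (filter constancy_point [fib n..<fib (Suc n)] @ [fib (Suc n) + 1])"
    using Lam_eq[of n] n by simp
  also have "\<dots> = diffs (map (\<lambda>x. x + fib n) (filter constancy_point [0..<fib (n - 1)]) @ [fib (Suc n) + 1])"
    by (simp only: Q_shift[OF n])
  also have "\<dots> = diffs (map (\<lambda>x. x + fib n) (filter constancy_point [0..<fib (n - 1)] @ [fib (n - 1) + 1]))"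
    using f1 by simp
  also have "\<dots> = diffs (filter constancy_point [0..<fib (n - 1)] @ [fib (n - 1) + 1])"
    by (rule diffs_map_add)
  also have "\<dots> = Psi_word (n - 1)" using Psi_eq[of "n - 1"] n by simp
  finally show ?thesis .
qed

lemma sZ_small: "sZ 3 = 1" "sZ 4 = 2" "sZ 5 = 1" "sZ 6 = 2" "sZ 7 = 2" "sZ 8 = 1"
proof -
  show "sZ 3 = 1" using sZ_fib[of 4] fib4 by simp
  show "sZ 4 = 2" using sZ_rec[of 4 4] fib4 fib5 sZ_1 by simp
  show "sZ 5 = 1" using sZ_fib[of 5] fib5 by simp
  show "sZ 6 = 2" using sZ_rec[of 5 6] fib5 fib6 sZ_1 by simp
  show "sZ 7 = 2" using sZ_rec[of 5 7] fib5 fib6 sZ_2 by simp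
  show "sZ 8 = 1" using sZ_fib[of 6] fib6 by simp
qed

lemma cps: "\<not> constancy_point 0" "constancy_point 1" "constancy_point 2"
  "\<not> constancy_point 3" "\<not> constancy_point 4" "\<not> constancy_point 5"
  "constancy_point 6" "\<not> constancy_point 7"
  unfolding constancy_point_def
  by (simp_all add: sZ_0 sZ_1 sZ_2 sZ_small sZ_1[unfolded One_nat_def] sZ_2[unfolded numeral_2_eq_2])

lemma Psi5: "Psi_word 5 = [1, 4]"
proof -
  have u: "[0..<5] = [0, 1, 2, 3, 4::nat]" by (simp add: upt_rec)
  have "filter constancy_point [0..<5] = [1, 2]"
    unfolding u using cps by simp
  then show ?thesis using Psi_eq[of 5] fib5 by simp
qed

lemma Lam5: "Lambda_word 5 = [3]"
proof -
  have u: "[5..<8] = [5, 6, 7::nat]" by (simp add: upt_rec)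
  have "filter constancy_point [5..<8] = [6]"
    unfolding u using cps by simp
  then show ?thesis using Lam_eq[of 5] fib5 fib6 by (simp add: numeral_eq_Suc)
qed

lemma h_append: "h (xs @ ys) = h xs @ h ys"
  unfolding h_def by simp

lemma hpow_append: "(h ^^ k) (xs @ ys) = (h ^^ k) xs @ (h ^^ k) ys"
  by (induction k) (auto simp: h_append)

lemma H_rec: "(h ^^ Suc (Suc k)) [3] = (h ^^ Suc k) [3] @ (h ^^ k) [3]"
proof -
  have "h (h [3]) = h [3] @ [3]" by (simp add: h_def)
  then have "(h ^^ Suc (Suc k)) [3] = (h ^^ k) (h [3] @ [3])"
    by (simp only: funpow_Suc_right comp_apply)
  also have "\<dots> = (h ^^ Suc k) [3] @ (h ^^ k) [3]"
    by (simp only: hpow_append funpow_Suc_right comp_apply)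
  finally show ?thesis .
qed

lemma Psi_all: "Psi_word (k + 5) = (h ^^ Suc k) [3] \<and> Psi_word (k + 6) = (h ^^ Suc (Suc k)) [3]"
proof (induction k)
  case 0
  have a: "Psi_word 5 = (h ^^ 1) [3]" using Psi5 by (simp add: h_def)
  have "Psi_word 6 = Psi_word 5 @ Lambda_word 5" using Psi_step[of 5] by (simp add: numeral_eq_Suc)
  then have "Psi_word 6 = (h ^^ 2) [3]" using Psi5 Lam5 by (simp add: h_def numeral_2_eq_2)
  then show ?case using a by (simp add: numeral_2_eq_2)
next
  case (Suc k)
  have "Psi_word (Suc k + 6) = Psi_word (k + 6) @ Lambda_word (k + 6)"
    using Psi_step[of "k + 6"] by simp
  also have "Lambda_word (k + 6) = Psi_word (k + 5)" using Lam_Psi[of "k + 6"] by (simp add: add.commute)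
  finally have "Psi_word (Suc k + 6) = (h ^^ Suc (Suc k)) [3] @ (h ^^ Suc k) [3]"
    using Suc.IH by simp
  then show ?case using Suc.IH H_rec[of "Suc k"] by (simp add: add.commute)
qed

theorem proposition1:
  fixes n :: nat
  assumes "n \<ge> 5"
  shows "Psi_word n = (h ^^ (n - 4)) [3] \<and> Lambda_word n = (h ^^ (n - 5)) [3]"
proof -
  obtain k where k: "n = k + 5" using assms by (metis add.commute le_Suc_ex)
  have p: "Psi_word n = (h ^^ (n - 4)) [3]" using Psi_all[of k] k by (simp add: Suc_diff_le)
  have l: "Lambda_word n = (h ^^ (n - 5)) [3]"
  proof (cases k)
    case 0
    then show ?thesis using k Lam5 by simp
  next
    case (Suc j)
    have "Lambda_word n = Psi_word (j + 5)" using Lam_Psi[of n] k Suc by (simp add: add.commute)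
    then show ?thesis using Psi_all[of j] k Suc by (simp add: add.commute)
  qed
  show ?thesis using p l by simp
qed

end
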